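(* Let $\mathcal X$ be a finite set. For every $\varepsilon>0$ there exist $\xi>0$ and $n_0>0$ such that for every $n>n_0$ the following holds. Suppose $\mu\in\mathcal P(\mathcal X^n)$ is $\xi$-homogeneous with respect to partitions $(\vec V,\vec S)$ of $[n]$ and $\mathcal X^n$, and $j\in[\#\vec S]$ is such that $\mu(S_j)>0$ and $\mu[\,\cdot\,|S_j]$ is $\xi$-regular with respect to $\vec V$. Then for every $\sigma\in S_j$, $$\sum_{i\in[\#\vec V]}\sum_{x\in V_i}\left\|\mu_x[\,\cdot\,|S_j]-\sigma[\,\cdot\,|V_i]\right\|_{TV}<\varepsilon n.$$
   Context: Notation: $\mathcal P(\mathcal X^n)$ is the set of probability measures on $\mathcal X^n$. For $\mu\in\mathcal P(\mathcal X^n)$, $\langle\cdot\rangle_\mu$ denotes expectation over $\boldsymbol\sigma\sim\mu$; $\mu_x$ is the marginal of coordinate $x$, and $\mu[\cdot|S]$, $\mu_x[\cdot|S]$ are $\mu$ and its marginal conditioned on $S\subset\mathcal X^n$. For $\emptyset\neq U\subset[n]$ and $\sigma\in\mathcal X^n$, $\sigma[\cdot|U]\in\mathcal P(\mathcal X)$ is $\sigma[\omega|U]=|U|^{-1}\sum_{u\in U}\mathbf 1\{\sigma(u)=\omega\}$. For a partition $\vec V=(V_1,\ldots,V_l)$, $\#\vec V=l$ is its size. Regularity: $\mu$ is $\varepsilon$-regular on $U\subset[n]$ if for every $S\subset U$ with $|S|\geq\varepsilon|U|$, $\langle\|\boldsymbol\sigma[\cdot|S]-\boldsymbol\sigma[\cdot|U]\|_{TV}\rangle_\mu<\varepsilon$.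 $\mu$ is $\varepsilon$-regular with respect to a partition $\vec V$ of $[n]$ if there is $J\subset[\#\vec V]$ with $\sum_{i\in J}|V_i|\geq(1-\varepsilon)n$ and $\mu$ is $\varepsilon$-regular on $V_i$ for all $i\in J$. Homogeneity: for partitions $\vec V$ of $[n]$ and $\vec S=(S_1,\ldots,S_{\#\vec S})$ of $\mathcal X^n$, $\mu$ is $\varepsilon$-homogeneous w.r.t. $(\vec V,\vec S)$ if there is $I\subset[\#\vec S]$ with: (HM1) $\mu(S_i)>0$ for all $i\in I$ and $\sum_{i\in I}\mu(S_i)\geq1-\varepsilon$; (HM2) for all $i\in[\#\vec S]$, $j\in[\#\vec V]$, $\max_{\sigma,\sigma'\in S_i}\|\sigma[\cdot|V_j]-\sigma'[\cdot|V_j]\|_{TV}<\varepsilon$; (HM3) for all $i\in I$, $\mu[\cdot|S_i]$ is $\varepsilon$-regular w.r.t. $\vec V$; (HM4) $\mu$ is $\varepsilon$-regular w.r.t. $\vec V$. *)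

theory Defs
  imports Complex_Main "HOL-Library.FuncSet"
begin

text \<open>Configurations: elements of X^n, represented as extensional functions
  on [n] = {0..<n} with values in the finite type 'a (playing the role of X).\<close>
definition configs :: "nat \<Rightarrow> (nat \<Rightarrow> 'a::finite) set" where
  "configs n = PiE {0..<n} (\<lambda>_. UNIV)"

definition is_prob :: "nat \<Rightarrow> ((nat \<Rightarrow> 'a::finite) \<Rightarrow> real) \<Rightarrow> bool" where
  "is_prob n \<mu> \<longleftrightarrow> (\<forall>\<sigma>\<in>configs n. \<mu> \<sigma> \<ge> 0) \<and> (\<Sum>\<sigma>\<in>configs n. \<mu> \<sigma>) = 1"

definition meas :: "nat \<Rightarrow> ((nat \<Rightarrow> 'a::finite) \<Rightarrow> real) \<Rightarrow> (nat \<Rightarrow> 'a) set \<Rightarrow> real" where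
  "meas n \<mu> A = (\<Sum>\<sigma>\<in>configs n \<inter> A. \<mu> \<sigma>)"

definition expect :: "nat \<Rightarrow> ((nat \<Rightarrow> 'a::finite) \<Rightarrow> real) \<Rightarrow> ((nat \<Rightarrow> 'a) \<Rightarrow> real) \<Rightarrow> real" where
  "expect n \<mu> f = (\<Sum>\<sigma>\<in>configs n. \<mu> \<sigma> * f \<sigma>)"

definition cond :: "nat \<Rightarrow> ((nat \<Rightarrow> 'a::finite) \<Rightarrow> real) \<Rightarrow> (nat \<Rightarrow> 'a) set \<Rightarrow> (nat \<Rightarrow> 'a) \<Rightarrow> real" where
  "cond n \<mu> S \<sigma> = (if \<sigma> \<in> S then \<mu> \<sigma> / meas n \<mu> S else 0)"

definition marginal :: "nat \<Rightarrow> ((nat \<Rightarrow> 'a::finite) \<Rightarrow> real) \<Rightarrow> nat \<Rightarrow> 'a \<Rightarrow> real" where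
  "marginal n \<mu> x \<omega> = meas n \<mu> {\<sigma>. \<sigma> x = \<omega>}"

definition emp :: "(nat \<Rightarrow> 'a::finite) \<Rightarrow> nat set \<Rightarrow> 'a \<Rightarrow> real" where
  "emp \<sigma> U \<omega> = real (card {u\<in>U. \<sigma> u = \<omega>}) / real (card U)"

definition tv :: "('a::finite \<Rightarrow> real) \<Rightarrow> ('a \<Rightarrow> real) \<Rightarrow> real" where
  "tv p q = (\<Sum>\<omega>\<in>UNIV. \<bar>p \<omega> - q \<omega>\<bar>) / 2"

definition is_partition :: "'b set \<Rightarrow> 'b set list \<Rightarrow> bool" where
  "is_partition A P \<longleftrightarrow>
     (\<forall>i<length P. P ! i \<noteq> {}) \<and>
     (\<forall>i<length P. \<forall>j<length P. i \<noteq> j \<longrightarrow> P ! i \<inter> P ! j = {}) \<and>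
     (\<Union>i<length P. P ! i) = A"

definition regular_on :: "nat \<Rightarrow> ((nat \<Rightarrow> 'a::finite) \<Rightarrow> real) \<Rightarrow> real \<Rightarrow> nat set \<Rightarrow> bool" where
  "regular_on n \<mu> \<epsilon> U \<longleftrightarrow>
     (\<forall>S\<subseteq>U. real (card S) \<ge> \<epsilon> * real (card U) \<longrightarrow>
        expect n \<mu> (\<lambda>\<sigma>. tv (emp \<sigma> S) (emp \<sigma> U)) < \<epsilon>)"

definition regular_wrt :: "nat \<Rightarrow> ((nat \<Rightarrow> 'a::finite) \<Rightarrow> real) \<Rightarrow> real \<Rightarrow> nat set list \<Rightarrow> bool" where
  "regular_wrt n \<mu> \<epsilon> V \<longleftrightarrow>
     (\<exists>J\<subseteq>{..<length V}. (\<Sum>i\<in>J. real (card (V ! i))) \<ge> (1 - \<epsilon>) * real n \<and>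
        (\<forall>i\<in>J. regular_on n \<mu> \<epsilon> (V ! i)))"

definition homogeneous :: "nat \<Rightarrow> ((nat \<Rightarrow> 'a::finite) \<Rightarrow> real) \<Rightarrow> real \<Rightarrow> nat set list
    \<Rightarrow> (nat \<Rightarrow> 'a) set list \<Rightarrow> bool" where
  "homogeneous n \<mu> \<epsilon> V S \<longleftrightarrow>
     (\<exists>I\<subseteq>{..<length S}.
        (\<forall>i\<in>I. meas n \<mu> (S ! i) > 0) \<and> (\<Sum>i\<in>I. meas n \<mu> (S ! i)) \<ge> 1 - \<epsilon> \<and>
        (\<forall>i<length S. \<forall>j<length V. \<forall>\<sigma>\<in>S ! i. \<forall>\<sigma>'\<in>S ! i.
            tv (emp \<sigma> (V ! j)) (emp \<sigma>' (V ! j)) < \<epsilon>) \<and>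
        (\<forall>i\<in>I. regular_wrt n (cond n \<mu> (S ! i)) \<epsilon> V) \<and>
        regular_wrt n \<mu> \<epsilon> V)"

end

theory Submission
  imports Defs
begin

lemma fin_configs: "finite (configs n :: (nat \<Rightarrow> 'a::finite) set)"
  unfolding configs_def by (simp add: finite_PiE)

lemma marginal_sum: "marginal n \<nu> x \<omega> = (\<Sum>\<sigma>\<in>configs n. \<nu> \<sigma> * (if \<sigma> x = \<omega> then 1 else 0))"
  unfolding marginal_def meas_def
  by (simp add: sum.inter_restrict[OF fin_configs] if_distrib cong: if_cong)

lemma card_as_sum: "finite S \<Longrightarrow> real (card {x\<in>S. P x}) = (\<Sum>x\<in>S. if P x then 1 else 0)"
  by (simp add: sum.If_cases Int_def conj_commute)

lemma sum_marg: "finite S \<Longrightarrow> (\<Sum>x\<in>S. marginal n \<nu> x \<omega>) = (\<Sum>\<sigma>\<in>configs n. \<nu> \<sigma> * real (card {x\<in>S. \<sigma> x = \<omega>}))"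
  apply (simp add: marginal_sum card_as_sum sum_distrib_left)
  apply (rule sum.swap)
  done

lemma marg_nonneg: "\<forall>\<sigma>\<in>configs n. \<nu> \<sigma> \<ge> 0 \<Longrightarrow> marginal n \<nu> x \<omega> \<ge> 0"
  unfolding marginal_def meas_def by (intro sum_nonneg) auto

lemma marg_le1: "\<forall>\<sigma>\<in>configs n. \<nu> \<sigma> \<ge> 0 \<Longrightarrow> (\<Sum>\<sigma>\<in>configs n. \<nu> \<sigma>) = 1 \<Longrightarrow> marginal n \<nu> x \<omega> \<le> 1"
proof -
  assume h: "\<forall>\<sigma>\<in>configs n. \<nu> \<sigma> \<ge> 0" "(\<Sum>\<sigma>\<in>configs n. \<nu> \<sigma>) = 1"
  have "(\<Sum>\<sigma>\<in>configs n \<inter> {\<sigma>. \<sigma> x = \<omega>}. \<nu> \<sigma>) \<le> (\<Sum>\<sigma>\<in>configs n. \<nu> \<sigma>)"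
    by (rule sum_mono2[OF fin_configs Int_lower1]) (use h in auto)
  thus ?thesis using h unfolding marginal_def meas_def by simp
qed

lemma marg_sum1: "(\<Sum>\<sigma>\<in>configs n. \<nu> \<sigma>) = 1 \<Longrightarrow> (\<Sum>\<omega>\<in>UNIV. marginal n \<nu> x \<omega>) = 1"
  apply (simp add: marginal_sum)
  apply (subst sum.swap)
  apply (simp add: if_distrib[of "\<lambda>t. _ * t"] sum.If_cases)
  done

lemma emp_sum1: "finite V \<Longrightarrow> V \<noteq> {} \<Longrightarrow> (\<Sum>\<omega>\<in>UNIV. emp \<sigma> V \<omega>) = 1"
proof -
  assume f: "finite V" and ne: "V \<noteq> {}"
  have "(\<Sum>\<omega>\<in>UNIV. real (card {u\<in>V. \<sigma> u = \<omega>})) = (\<Sum>u\<in>V. \<Sum>\<omega>\<in>UNIV. if \<sigma> u = \<omega> then 1 else 0)"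
    using f by (simp add: card_as_sum, subst sum.swap, simp)
  also have "\<dots> = real (card V)" by simp
  finally show ?thesis using f ne by (simp add: emp_def sum_divide_distrib[symmetric])
qed

lemma emp_bounds: "finite V \<Longrightarrow> V \<noteq> {} \<Longrightarrow> 0 \<le> emp \<sigma> V \<omega> \<and> emp \<sigma> V \<omega> \<le> 1"
  unfolding emp_def by (auto simp: card_mono divide_le_eq_1)

lemma pt_tv: "\<bar>f \<omega> - g \<omega>\<bar> \<le> 2 * tv f g"
  unfolding tv_def by (simp, intro member_le_sum) auto

lemma B1:
  fixes \<nu> :: "(nat \<Rightarrow> 'a::finite) \<Rightarrow> real" and p :: "'a \<Rightarrow> real" and T :: "(nat \<Rightarrow> 'a) set"
  assumes fV: "finite V" and neV: "V \<noteq> {}" and hp: "\<forall>\<sigma>\<in>configs n. \<nu> \<sigma> \<ge> 0"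
    and hs: "(\<Sum>\<sigma>\<in>configs n. \<nu> \<sigma>) = 1"
    and hz: "\<forall>\<sigma>\<in>configs n. \<sigma> \<notin> T \<longrightarrow> \<nu> \<sigma> = 0"
    and hT: "\<forall>\<sigma>\<in>configs n \<inter> T. tv (emp \<sigma> V) p < \<xi>"
    and reg: "regular_on n \<nu> \<xi> V" and p0: "0 \<le> p \<omega>" and p1: "p \<omega> \<le> 1"
    and SV: "S \<subseteq> V" and xi: "\<xi> > 0"
  shows "\<bar>\<Sum>x\<in>S. (marginal n \<nu> x \<omega> - p \<omega>)\<bar> \<le> 4 * \<xi> * real (card V)"
proof (cases "real (card S) \<ge> \<xi> * real (card V)")
  case True
  have fS: "finite S" using SV fV by (rule finite_subset)
  have "card V > 0" using neV fV by (simp add: card_gt_0_iff)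
  hence "\<xi> * real (card V) > 0" using xi by simp
  hence cS: "card S > 0" using True by linarith
  have ex: "expect n \<nu> (\<lambda>\<sigma>. tv (emp \<sigma> S) (emp \<sigma> V)) < \<xi>"
    using reg True SV unfolding regular_on_def by blast
  have e1: "real (card {x\<in>S. \<sigma> x = \<omega>}) = real (card S) * emp \<sigma> S \<omega>" for \<sigma> :: "nat \<Rightarrow> 'a"
    using cS by (simp add: emp_def)
  have "(\<Sum>x\<in>S. (marginal n \<nu> x \<omega> - p \<omega>)) =
      (\<Sum>\<sigma>\<in>configs n. \<nu> \<sigma> * real (card {x\<in>S. \<sigma> x = \<omega>})) - real (card S) * p \<omega>"
    using fS by (simp add: sum_subtractf sum_marg)
  also have "\<dots> = real (card S) * (\<Sum>\<sigma>\<in>configs n. \<nu> \<sigma> * (emp \<sigma> S \<omega> - p \<omega>))"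
  proof -
    have a: "(\<Sum>\<sigma>\<in>configs n. \<nu> \<sigma> * (emp \<sigma> S \<omega> - p \<omega>)) = (\<Sum>\<sigma>\<in>configs n. \<nu> \<sigma> * emp \<sigma> S \<omega>) - (\<Sum>\<sigma>\<in>configs n. \<nu> \<sigma>) * p \<omega>"
      by (simp add: right_diff_distrib sum_subtractf sum_distrib_right)
    have b: "(\<Sum>\<sigma>\<in>configs n. \<nu> \<sigma> * real (card {x\<in>S. \<sigma> x = \<omega>})) = real (card S) * (\<Sum>\<sigma>\<in>configs n. \<nu> \<sigma> * emp \<sigma> S \<omega>)"
      by (simp add: e1 sum_distrib_left mult.left_commute)
    show ?thesis unfolding a b hs by (simp add: right_diff_distrib)
  qed
  finally have eq: "(\<Sum>x\<in>S. (marginal n \<nu> x \<omega> - p \<omega>)) = real (card S) * (\<Sum>\<sigma>\<in>configs n. \<nu> \<sigma> * (emp \<sigma> S \<omega> - p \<omega>))" .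
  have "\<bar>\<Sum>\<sigma>\<in>configs n. \<nu> \<sigma> * (emp \<sigma> S \<omega> - p \<omega>)\<bar> \<le> (\<Sum>\<sigma>\<in>configs n. \<bar>\<nu> \<sigma> * (emp \<sigma> S \<omega> - p \<omega>)\<bar>)"
    by (rule sum_abs)
  also have "\<dots> \<le> (\<Sum>\<sigma>\<in>configs n. \<nu> \<sigma> * (2 * tv (emp \<sigma> S) (emp \<sigma> V)) + \<nu> \<sigma> * (2 * \<xi>))"
  proof (rule sum_mono)
    fix \<sigma> :: "nat \<Rightarrow> 'a" assume s: "\<sigma> \<in> configs n"
    show "\<bar>\<nu> \<sigma> * (emp \<sigma> S \<omega> - p \<omega>)\<bar> \<le> \<nu> \<sigma> * (2 * tv (emp \<sigma> S) (emp \<sigma> V)) + \<nu> \<sigma> * (2 * \<xi>)"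
    proof (cases "\<sigma> \<in> T")
      case True
      have a: "\<bar>emp \<sigma> S \<omega> - emp \<sigma> V \<omega>\<bar> \<le> 2 * tv (emp \<sigma> S) (emp \<sigma> V)" by (rule pt_tv)
      have b: "\<bar>emp \<sigma> V \<omega> - p \<omega>\<bar> \<le> 2 * tv (emp \<sigma> V) p" by (rule pt_tv)
      have c: "tv (emp \<sigma> V) p < \<xi>" using hT s True by blast
      have "\<bar>emp \<sigma> S \<omega> - p \<omega>\<bar> \<le> 2 * tv (emp \<sigma> S) (emp \<sigma> V) + 2 * \<xi>" using a b c by linarith
      hence "\<nu> \<sigma> * \<bar>emp \<sigma> S \<omega> - p \<omega>\<bar> \<le> \<nu> \<sigma> * (2 * tv (emp \<sigma> S) (emp \<sigma> V) + 2 * \<xi>)"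
        using hp s by (intro mult_left_mono) auto
      thus ?thesis using hp s by (simp add: abs_mult distrib_left)
    next
      case False thus ?thesis using hz s by simp
    qed
  qed
  also have "\<dots> = 2 * expect n \<nu> (\<lambda>\<sigma>. tv (emp \<sigma> S) (emp \<sigma> V)) + 2 * \<xi>"
  proof -
    have a: "(\<Sum>\<sigma>\<in>configs n. \<nu> \<sigma> * (2 * tv (emp \<sigma> S) (emp \<sigma> V))) = 2 * expect n \<nu> (\<lambda>\<sigma>. tv (emp \<sigma> S) (emp \<sigma> V))"
      by (simp add: expect_def sum_distrib_left mult.left_commute)
    have b: "(\<Sum>\<sigma>\<in>configs n. \<nu> \<sigma> * (2 * \<xi>)) = 2 * \<xi>"
      by (simp add: hs flip: sum_distrib_right)
    show ?thesis by (simp only: sum.distrib a b)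
  qed
  also have "\<dots> \<le> 4 * \<xi>" using ex by linarith
  finally have k: "\<bar>\<Sum>\<sigma>\<in>configs n. \<nu> \<sigma> * (emp \<sigma> S \<omega> - p \<omega>)\<bar> \<le> 4 * \<xi>" .
  have "card S \<le> card V" using SV fV card_mono by blast
  hence "real (card S) * \<bar>\<Sum>\<sigma>\<in>configs n. \<nu> \<sigma> * (emp \<sigma> S \<omega> - p \<omega>)\<bar> \<le> real (card V) * (4 * \<xi>)"
    using k by (intro mult_mono) auto
  thus ?thesis by (simp add: eq abs_mult algebra_simps)
next
  case False
  have "\<bar>\<Sum>x\<in>S. (marginal n \<nu> x \<omega> - p \<omega>)\<bar> \<le> (\<Sum>x\<in>S. \<bar>marginal n \<nu> x \<omega> - p \<omega>\<bar>)" by (rule sum_abs)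
  also have "\<dots> \<le> (\<Sum>x\<in>S. 1)"
  proof (rule sum_mono)
    fix x
    have "0 \<le> marginal n \<nu> x \<omega>" by (rule marg_nonneg[OF hp])
    moreover have "marginal n \<nu> x \<omega> \<le> 1" by (rule marg_le1[OF hp hs])
    ultimately show "\<bar>marginal n \<nu> x \<omega> - p \<omega>\<bar> \<le> 1" using p0 p1 by linarith
  qed
  also have "\<dots> = real (card S)" by simp
  also have "\<dots> \<le> \<xi> * real (card V)" using False by linarith
  also have "\<dots> \<le> 4 * \<xi> * real (card V)" using xi by simp
  finally show ?thesis .
qed


lemma B2:
  fixes \<nu> :: "(nat \<Rightarrow> 'a::finite) \<Rightarrow> real" and p :: "'a \<Rightarrow> real" and T :: "(nat \<Rightarrow> 'a) set"
  assumes fV: "finite V" and neV: "V \<noteq> {}" and hp: "\<forall>\<sigma>\<in>configs n. \<nu> \<sigma> \<ge> 0"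
    and hs: "(\<Sum>\<sigma>\<in>configs n. \<nu> \<sigma>) = 1"
    and hz: "\<forall>\<sigma>\<in>configs n. \<sigma> \<notin> T \<longrightarrow> \<nu> \<sigma> = 0"
    and hT: "\<forall>\<sigma>\<in>configs n \<inter> T. tv (emp \<sigma> V) p < \<xi>"
    and reg: "regular_on n \<nu> \<xi> V" and p0: "0 \<le> p \<omega>" and p1: "p \<omega> \<le> 1"
    and xi: "\<xi> > 0"
  shows "(\<Sum>x\<in>V. \<bar>marginal n \<nu> x \<omega> - p \<omega>\<bar>) \<le> 8 * \<xi> * real (card V)"
proof -
  define a where "a x = marginal n \<nu> x \<omega> - p \<omega>" for x
  define P where "P = {x\<in>V. a x \<ge> 0}"
  have PV: "P \<subseteq> V" unfolding P_def by auto
  have NV: "V - P \<subseteq> V" by auto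
  have bP: "\<bar>\<Sum>x\<in>P. a x\<bar> \<le> 4 * \<xi> * real (card V)"
    unfolding a_def by (rule B1[OF fV neV hp hs hz hT reg p0 p1 PV xi])
  have bN: "\<bar>\<Sum>x\<in>V - P. a x\<bar> \<le> 4 * \<xi> * real (card V)"
    unfolding a_def by (rule B1[OF fV neV hp hs hz hT reg p0 p1 NV xi])
  have "(\<Sum>x\<in>V. \<bar>a x\<bar>) = (\<Sum>x\<in>V - P. \<bar>a x\<bar>) + (\<Sum>x\<in>P. \<bar>a x\<bar>)"
    using sum.subset_diff[OF PV fV] by simp
  also have "(\<Sum>x\<in>P. \<bar>a x\<bar>) = (\<Sum>x\<in>P. a x)"
    by (rule sum.cong) (auto simp: P_def)
  also have "(\<Sum>x\<in>V - P. \<bar>a x\<bar>) = - (\<Sum>x\<in>V - P. a x)"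
    by (simp add: sum_negf[symmetric], rule sum.cong) (auto simp: P_def)
  finally have "(\<Sum>x\<in>V. \<bar>a x\<bar>) \<le> \<bar>\<Sum>x\<in>V - P. a x\<bar> + \<bar>\<Sum>x\<in>P. a x\<bar>" by linarith
  thus ?thesis using bP bN unfolding a_def by linarith
qed

lemma B3:
  fixes \<nu> :: "(nat \<Rightarrow> 'a::finite) \<Rightarrow> real" and p :: "'a \<Rightarrow> real" and T :: "(nat \<Rightarrow> 'a) set"
  assumes fV: "finite V" and neV: "V \<noteq> {}" and hp: "\<forall>\<sigma>\<in>configs n. \<nu> \<sigma> \<ge> 0"
    and hs: "(\<Sum>\<sigma>\<in>configs n. \<nu> \<sigma>) = 1"
    and hz: "\<forall>\<sigma>\<in>configs n. \<sigma> \<notin> T \<longrightarrow> \<nu> \<sigma> = 0"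
    and hT: "\<forall>\<sigma>\<in>configs n \<inter> T. tv (emp \<sigma> V) p < \<xi>"
    and reg: "regular_on n \<nu> \<xi> V" and p0: "\<forall>\<omega>. 0 \<le> p \<omega>" and p1: "\<forall>\<omega>. p \<omega> \<le> 1"
    and xi: "\<xi> > 0"
  shows "(\<Sum>x\<in>V. tv (marginal n \<nu> x) p) \<le> 4 * \<xi> * real (card (UNIV::'a set)) * real (card V)"
proof -
  have "(\<Sum>x\<in>V. tv (marginal n \<nu> x) p) = (\<Sum>\<omega>\<in>UNIV. \<Sum>x\<in>V. \<bar>marginal n \<nu> x \<omega> - p \<omega>\<bar>) / 2"
    unfolding tv_def by (simp add: sum_divide_distrib[symmetric], rule sum.swap)
  also have "\<dots> \<le> (\<Sum>\<omega>\<in>(UNIV::'a set). 8 * \<xi> * real (card V)) / 2"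
    by (intro divide_right_mono sum_mono B2[OF fV neV hp hs hz hT reg] p0[rule_format] p1[rule_format] xi) auto
  also have "\<dots> = 4 * \<xi> * real (card (UNIV::'a set)) * real (card V)" by simp
  finally show ?thesis .
qed

lemma tv_le1: "(\<forall>\<omega>. 0 \<le> f \<omega>) \<Longrightarrow> (\<forall>\<omega>. 0 \<le> g \<omega>) \<Longrightarrow> sum f UNIV = 1 \<Longrightarrow> sum g UNIV = 1 \<Longrightarrow> tv f g \<le> 1"
proof -
  assume a: "\<forall>\<omega>. 0 \<le> f \<omega>" "\<forall>\<omega>. 0 \<le> g \<omega>" "sum f UNIV = 1" "sum g UNIV = 1"
  have "(\<Sum>\<omega>\<in>UNIV. \<bar>f \<omega> - g \<omega>\<bar>) \<le> (\<Sum>\<omega>\<in>UNIV. f \<omega> + g \<omega>)"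
    using a by (intro sum_mono) (simp add: abs_le_iff)
  also have "\<dots> = 2" using a by (simp add: sum.distrib)
  finally show ?thesis by (simp add: tv_def)
qed


lemma part_facts:
  fixes n :: nat and V :: "nat set list"
  assumes "is_partition {0..<n} V" "i < length V"
  shows "finite (V ! i)" "V ! i \<noteq> {}" "V ! i \<subseteq> {0..<n}"
proof -
  have "V ! i \<subseteq> (\<Union>i<length V. V ! i)" using assms(2) by auto
  thus c: "V ! i \<subseteq> {0..<n}" using assms(1) unfolding is_partition_def by simp
  thus "finite (V ! i)" by (rule finite_subset) simp
  show "V ! i \<noteq> {}" using assms unfolding is_partition_def by simp
qed

lemma part_card:
  fixes n :: nat and V :: "nat set list"
  assumes "is_partition {0..<n} V"
  shows "(\<Sum>i<length V. real (card (V ! i))) = real n"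
proof -
  have "card (\<Union>i\<in>{..<length V}. V ! i) = (\<Sum>i<length V. card (V ! i))"
    by (rule card_UN_disjoint) (use assms part_facts(1) in \<open>auto simp: is_partition_def\<close>)
  moreover have "(\<Union>i\<in>{..<length V}. V ! i) = {0..<n}" using assms unfolding is_partition_def by simp
  ultimately have "(\<Sum>i<length V. card (V ! i)) = n" by simp
  thus ?thesis by (metis of_nat_sum)
qed

lemma cond_facts:
  fixes \<mu> :: "(nat \<Rightarrow> 'a::finite) \<Rightarrow> real"
  assumes "is_prob n \<mu>" "meas n \<mu> T > 0"
  shows "\<forall>\<sigma>\<in>configs n. cond n \<mu> T \<sigma> \<ge> 0" "(\<Sum>\<sigma>\<in>configs n. cond n \<mu> T \<sigma>) = 1"
    "\<forall>\<sigma>\<in>configs n. \<sigma> \<notin> T \<longrightarrow> cond n \<mu> T \<sigma> = 0"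
proof -
  show "\<forall>\<sigma>\<in>configs n. cond n \<mu> T \<sigma> \<ge> 0" using assms unfolding is_prob_def cond_def by auto
  show "\<forall>\<sigma>\<in>configs n. \<sigma> \<notin> T \<longrightarrow> cond n \<mu> T \<sigma> = 0" unfolding cond_def by auto
  have "(\<Sum>\<sigma>\<in>configs n. cond n \<mu> T \<sigma>) = (\<Sum>\<sigma>\<in>configs n \<inter> T. \<mu> \<sigma> / meas n \<mu> T)"
    unfolding cond_def by (simp add: sum.inter_restrict[OF fin_configs])
  also have "\<dots> = meas n \<mu> T / meas n \<mu> T" unfolding meas_def by (rule sum_divide_distrib[symmetric])
  finally show "(\<Sum>\<sigma>\<in>configs n. cond n \<mu> T \<sigma>) = 1" using assms(2) by simp
qed

theorem lemma8:
  fixes dummy :: "'a::finite itself"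
  shows "\<forall>\<epsilon>>0. \<exists>\<xi>>0. \<exists>n0::nat>0. \<forall>n>n0.
    \<forall>(\<mu>::(nat \<Rightarrow> 'a) \<Rightarrow> real) V S j.
      is_prob n \<mu> \<and> is_partition {0..<n} V \<and> is_partition (configs n) S \<and>
      homogeneous n \<mu> \<xi> V S \<and> j < length S \<and> meas n \<mu> (S ! j) > 0 \<and>
      regular_wrt n (cond n \<mu> (S ! j)) \<xi> V \<longrightarrow>
      (\<forall>\<sigma>\<in>S ! j. (\<Sum>i<length V. \<Sum>x\<in>V ! i.
          tv (marginal n (cond n \<mu> (S ! j)) x) (emp \<sigma> (V ! i))) < \<epsilon> * real n)"
proof (intro allI impI)
  fix \<epsilon> :: real assume ep: "\<epsilon> > 0"
  define C where "C = real (card (UNIV :: 'a set))"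
  have C0: "C \<ge> 0" unfolding C_def by simp
  define \<xi> where "\<xi> = \<epsilon> / (8 * C + 2)"
  have xi: "\<xi> > 0" unfolding \<xi>_def using ep C0 by simp
  have xiC: "(4 * C + 1) * \<xi> = \<epsilon> / 2" unfolding \<xi>_def using C0 by (simp add: field_simps)
  show "\<exists>\<xi>>0. \<exists>n0::nat>0. \<forall>n>n0.
    \<forall>(\<mu>::(nat \<Rightarrow> 'a) \<Rightarrow> real) V S j.
      is_prob n \<mu> \<and> is_partition {0..<n} V \<and> is_partition (configs n) S \<and>
      homogeneous n \<mu> \<xi> V S \<and> j < length S \<and> meas n \<mu> (S ! j) > 0 \<and>
      regular_wrt n (cond n \<mu> (S ! j)) \<xi> V \<longrightarrow>
      (\<forall>\<sigma>\<in>S ! j. (\<Sum>i<length V. \<Sum>x\<in>V ! i.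
          tv (marginal n (cond n \<mu> (S ! j)) x) (emp \<sigma> (V ! i))) < \<epsilon> * real n)"
  proof (intro exI[of _ \<xi>] conjI xi exI[of _ "1::nat"] allI impI ballI, simp)
    fix n :: nat and \<mu> :: "(nat \<Rightarrow> 'a) \<Rightarrow> real" and V S j \<sigma>
    assume n: "1 < n"
    assume H: "is_prob n \<mu> \<and> is_partition {0..<n} V \<and> is_partition (configs n) S \<and>
      homogeneous n \<mu> \<xi> V S \<and> j < length S \<and> meas n \<mu> (S ! j) > 0 \<and>
      regular_wrt n (cond n \<mu> (S ! j)) \<xi> V"
    assume sj: "\<sigma> \<in> S ! j"
    define \<nu> where "\<nu> = cond n \<mu> (S ! j)"
    define T where "T = S ! j"
    have hp: "\<forall>\<sigma>\<in>configs n. \<nu> \<sigma> \<ge> 0" and hs: "(\<Sum>\<sigma>\<in>configs n. \<nu> \<sigma>) = 1"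
      and hz: "\<forall>\<sigma>\<in>configs n. \<sigma> \<notin> T \<longrightarrow> \<nu> \<sigma> = 0"
      using cond_facts[of n \<mu> "S ! j"] H unfolding \<nu>_def T_def by auto
    have pV: "is_partition {0..<n} V" using H by blast
    obtain I where hm2: "\<forall>i<length S. \<forall>k<length V. \<forall>\<sigma>\<in>S ! i. \<forall>\<sigma>'\<in>S ! i.
            tv (emp \<sigma> (V ! k)) (emp \<sigma>' (V ! k)) < \<xi>"
      using H unfolding homogeneous_def by blast
    obtain J where J: "J \<subseteq> {..<length V}" "(\<Sum>i\<in>J. real (card (V ! i))) \<ge> (1 - \<xi>) * real n"
        "\<forall>i\<in>J. regular_on n \<nu> \<xi> (V ! i)"
      using H unfolding regular_wrt_def \<nu>_def by blast
    define f where "f i = (\<Sum>x\<in>V ! i. tv (marginal n \<nu> x) (emp \<sigma> (V ! i)))" for i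
    define cJ where "cJ = (\<Sum>i\<in>J. real (card (V ! i)))"
    have fJ: "f i \<le> 4 * \<xi> * C * real (card (V ! i))" if i: "i \<in> J" for i
    proof -
      have il: "i < length V" using J(1) i by auto
      have hT: "\<forall>\<sigma>'\<in>configs n \<inter> T. tv (emp \<sigma>' (V ! i)) (emp \<sigma> (V ! i)) < \<xi>"
        using hm2 H il sj unfolding T_def by blast
      show ?thesis unfolding f_def C_def
        by (rule B3[OF part_facts(1,2)[OF pV il] hp hs hz hT J(3)[rule_format, OF i]])
           (use emp_bounds[OF part_facts(1,2)[OF pV il]] xi in auto)
    qed
    have fN: "f i \<le> real (card (V ! i))" if i: "i < length V" for i
    proof -
      have "f i \<le> (\<Sum>x\<in>V ! i. 1)" unfolding f_def
      proof (rule sum_mono, rule tv_le1)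
        fix x
        show "\<forall>\<omega>. 0 \<le> marginal n \<nu> x \<omega>" using marg_nonneg[OF hp] by blast
        show "\<forall>\<omega>. 0 \<le> emp \<sigma> (V ! i) \<omega>" using emp_bounds[OF part_facts(1,2)[OF pV i]] by blast
        show "sum (marginal n \<nu> x) UNIV = 1" by (rule marg_sum1[OF hs])
        show "sum (emp \<sigma> (V ! i)) UNIV = 1" by (rule emp_sum1[OF part_facts(1,2)[OF pV i]])
      qed
      thus ?thesis by simp
    qed
    have fin: "finite {..<length V}" by simp
    have split: "(\<Sum>i<length V. f i) = (\<Sum>i\<in>{..<length V} - J. f i) + (\<Sum>i\<in>J. f i)"
      using sum.subset_diff[OF J(1) fin] by simp
    have splitc: "real n = (\<Sum>i\<in>{..<length V} - J. real (card (V ! i))) + cJ"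
      using sum.subset_diff[OF J(1) fin, of "\<lambda>i. real (card (V ! i))"] part_card[OF pV] unfolding cJ_def by simp
    have s1: "(\<Sum>i\<in>J. f i) \<le> 4 * \<xi> * C * cJ"
      unfolding cJ_def sum_distrib_left by (rule sum_mono) (use fJ in auto)
    have s2: "(\<Sum>i\<in>{..<length V} - J. f i) \<le> (\<Sum>i\<in>{..<length V} - J. real (card (V ! i)))"
      by (rule sum_mono) (use fN in auto)
    have cJn: "cJ \<le> real n" using splitc sum_nonneg[of "{..<length V} - J" "\<lambda>i. real (card (V ! i))"] by simp
    have cJl: "cJ \<ge> (1 - \<xi>) * real n" using J(2) unfolding cJ_def .
    have "4 * \<xi> * C * cJ \<le> 4 * \<xi> * C * real n" using cJn xi C0 by (intro mult_left_mono) auto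
    hence "(\<Sum>i<length V. f i) \<le> 4 * \<xi> * C * real n + \<xi> * real n"
      using split splitc s1 s2 cJl by (simp add: algebra_simps)
    also have "\<dots> = (4 * C + 1) * \<xi> * real n" by (simp add: algebra_simps)
    also have "\<dots> = \<epsilon> / 2 * real n" using xiC by simp
    also have "\<dots> < \<epsilon> * real n" using ep n by simp
    finally show "(\<Sum>i<length V. \<Sum>x\<in>V ! i.
          tv (marginal n (cond n \<mu> (S ! j)) x) (emp \<sigma> (V ! i))) < \<epsilon> * real n"
      unfolding f_def \<nu>_def .
  qed
qed

end
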